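(* Let $\Sigma_1\subset(N_1)_{\mathbf R}$ and $\Sigma_2\subset(N_2)_{\mathbf R}$ be amply equivalent complete fans (via $\Psi$) with $\Sigma_1$ smooth, and let $\Phi:(N_1)_{\mathbf Q}\to(N_2)_{\mathbf Q}$ be the $\mathbf Q$-linear isomorphism with $\Phi(u_\rho)=u_{\Psi(\rho)}$ for all $\rho\in\Sigma_1(1)$. Then the restriction of $\Phi$ to $N_1$ factors through $N_2$ as an injective $\mathbf Z$-linear map $N_1\hookrightarrow N_2$. Moreover $\Sigma_2$ is simplicial, and the following are equivalent: (1) some maximal cone of $\Sigma_2$ is smooth; (2) the restriction of $\Phi$ to $N_1$ factors as a $\mathbf Z$-isomorphism $N_1\cong N_2$; (3) $\Sigma_2$ is smooth. In this case, the isomorphism $N_1\cong N_2$ induces a toric isomorphism $X_{\Sigma_1}\cong X_{\Sigma_2}$.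
   Context: For a fan: rays $\Sigma(1)$, primitive generators $u_\rho$; a primitive collection is $C\subset\Sigma(1)$ not contained in $\sigma(1)$ for any cone $\sigma$ while every proper subset is. Complete fans $\Sigma_1,\Sigma_2$ in lattices of equal rank are amply equivalent via a bijection $\Psi:\Sigma_1(1)\to\Sigma_2(1)$ if $\Psi$ maps primitive collections exactly onto primitive collections and, for all integers $(a_\rho)$, $\sum a_\rho u_\rho=0\iff\sum a_\rho u_{\Psi(\rho)}=0$; in that case a $\mathbf Q$-linear isomorphism $\Phi$ with $\Phi(u_\rho)=u_{\Psi(\rho)}$ exists, and its $\mathbf R$-extension maps cones of $\Sigma_1$ bijectively onto cones of $\Sigma_2$. A cone is smooth if its primitive ray generators form part of a $\mathbf Z$-basis of the lattice; a fan is smooth (resp. simplicial) if all its cones are smooth (resp. have linearly independent ray generators). *)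

theory Defs
  imports "HOL-Analysis.Analysis"
begin

text \<open>The lattice N is modelled as the integer points of real^'n (so N_R = real^'n).\<close>

definition lattice_pt :: "real^'n \<Rightarrow> bool" where
  "lattice_pt v \<longleftrightarrow> (\<forall>i. v $ i \<in> \<int>)"

definition lattice :: "(real^'n) set" where
  "lattice = {v. lattice_pt v}"

definition pos_hull :: "(real^'n) set \<Rightarrow> (real^'n) set" where
  "pos_hull S = {y. \<exists>c. (\<forall>s\<in>S. c s \<ge> 0) \<and> y = (\<Sum>s\<in>S. c s *\<^sub>R s)}"

definition rat_poly_cone :: "(real^'n) set \<Rightarrow> bool" where
  "rat_poly_cone \<sigma> \<longleftrightarrow> (\<exists>S. finite S \<and> S \<subseteq> lattice \<and> \<sigma> = pos_hull S)"

definition strongly_convex :: "(real^'n) set \<Rightarrow> bool" where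
  "strongly_convex \<sigma> \<longleftrightarrow> \<sigma> \<inter> uminus ` \<sigma> = {0}"

definition fan :: "(real^'n) set set \<Rightarrow> bool" where
  "fan \<Sigma> \<longleftrightarrow> finite \<Sigma> \<and>
     (\<forall>\<sigma>\<in>\<Sigma>. rat_poly_cone \<sigma> \<and> strongly_convex \<sigma>) \<and>
     (\<forall>\<sigma>\<in>\<Sigma>. \<forall>\<tau>. \<tau> face_of \<sigma> \<and> \<tau> \<noteq> {} \<longrightarrow> \<tau> \<in> \<Sigma>) \<and>
     (\<forall>\<sigma>\<in>\<Sigma>. \<forall>\<tau>\<in>\<Sigma>. (\<sigma> \<inter> \<tau>) face_of \<sigma> \<and> (\<sigma> \<inter> \<tau>) face_of \<tau>)"

definition complete_fan :: "(real^'n) set set \<Rightarrow> bool" where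
  "complete_fan \<Sigma> \<longleftrightarrow> fan \<Sigma> \<and> \<Union>\<Sigma> = UNIV"

definition rays :: "(real^'n) set set \<Rightarrow> (real^'n) set set" where
  "rays \<Sigma> = {\<rho>\<in>\<Sigma>. aff_dim \<rho> = 1}"

definition cone_rays :: "(real^'n) set set \<Rightarrow> (real^'n) set \<Rightarrow> (real^'n) set set" where
  "cone_rays \<Sigma> \<sigma> = {\<rho>\<in>rays \<Sigma>. \<rho> \<subseteq> \<sigma>}"

definition prim_gen :: "(real^'n) set \<Rightarrow> real^'n" where
  "prim_gen \<rho> = (THE u. u \<in> \<rho> \<and> lattice_pt u \<and> u \<noteq> 0 \<and>
      (\<forall>v\<in>\<rho>. lattice_pt v \<longrightarrow> (\<exists>k::nat. v = real k *\<^sub>R u)))"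

definition primitive_collection :: "(real^'n) set set \<Rightarrow> (real^'n) set set \<Rightarrow> bool" where
  "primitive_collection \<Sigma> C \<longleftrightarrow> C \<subseteq> rays \<Sigma> \<and>
     \<not> (\<exists>\<sigma>\<in>\<Sigma>. C \<subseteq> cone_rays \<Sigma> \<sigma>) \<and>
     (\<forall>C'. C' \<subset> C \<longrightarrow> (\<exists>\<sigma>\<in>\<Sigma>. C' \<subseteq> cone_rays \<Sigma> \<sigma>))"

definition amply_equivalent ::
  "(real^'n) set set \<Rightarrow> (real^'n) set set \<Rightarrow> ((real^'n) set \<Rightarrow> (real^'n) set) \<Rightarrow> bool" where
  "amply_equivalent \<Sigma>1 \<Sigma>2 \<Psi> \<longleftrightarrow>
     complete_fan \<Sigma>1 \<and> complete_fan \<Sigma>2 \<and>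
     bij_betw \<Psi> (rays \<Sigma>1) (rays \<Sigma>2) \<and>
     (\<forall>C. C \<subseteq> rays \<Sigma>1 \<longrightarrow> (primitive_collection \<Sigma>1 C \<longleftrightarrow> primitive_collection \<Sigma>2 (\<Psi> ` C))) \<and>
     (\<forall>a :: (real^'n) set \<Rightarrow> int.
        (\<Sum>\<rho>\<in>rays \<Sigma>1. of_int (a \<rho>) *\<^sub>R prim_gen \<rho>) = 0 \<longleftrightarrow>
        (\<Sum>\<rho>\<in>rays \<Sigma>1. of_int (a \<rho>) *\<^sub>R prim_gen (\<Psi> \<rho>)) = 0)"

definition Z_basis :: "(real^'n) set \<Rightarrow> bool" where
  "Z_basis B \<longleftrightarrow> finite B \<and> B \<subseteq> lattice \<and>
     (\<forall>c :: real^'n \<Rightarrow> int. (\<Sum>b\<in>B. of_int (c b) *\<^sub>R b) = 0 \<longrightarrow> (\<forall>b\<in>B. c b = 0)) \<and>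
     (\<forall>v\<in>lattice. \<exists>c :: real^'n \<Rightarrow> int. v = (\<Sum>b\<in>B. of_int (c b) *\<^sub>R b))"

definition smooth_cone :: "(real^'n) set set \<Rightarrow> (real^'n) set \<Rightarrow> bool" where
  "smooth_cone \<Sigma> \<sigma> \<longleftrightarrow> (\<exists>B. Z_basis B \<and> prim_gen ` cone_rays \<Sigma> \<sigma> \<subseteq> B)"

definition smooth_fan :: "(real^'n) set set \<Rightarrow> bool" where
  "smooth_fan \<Sigma> \<longleftrightarrow> (\<forall>\<sigma>\<in>\<Sigma>. smooth_cone \<Sigma> \<sigma>)"

definition simplicial_fan :: "(real^'n) set set \<Rightarrow> bool" where
  "simplicial_fan \<Sigma> \<longleftrightarrow> (\<forall>\<sigma>\<in>\<Sigma>.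
     inj_on prim_gen (cone_rays \<Sigma> \<sigma>) \<and> independent (prim_gen ` cone_rays \<Sigma> \<sigma>))"

definition maximal_cone :: "(real^'n) set set \<Rightarrow> (real^'n) set \<Rightarrow> bool" where
  "maximal_cone \<Sigma> \<sigma> \<longleftrightarrow> \<sigma> \<in> \<Sigma> \<and> \<not> (\<exists>\<tau>\<in>\<Sigma>. \<sigma> \<subset> \<tau>)"

end

theory Submission
  imports Defs
begin

lemma pos_hull_sub: "finite S \<Longrightarrow> pos_hull S \<subseteq> convex_cone hull S"
proof
  fix y assume fS: "finite S" and "y \<in> pos_hull S"
  then obtain c where c: "\<forall>s\<in>S. c s \<ge> 0" "y = (\<Sum>s\<in>S. c s *\<^sub>R s)" unfolding pos_hull_def by auto
  have "\<And>T. T \<subseteq> S \<Longrightarrow> (\<Sum>s\<in>T. c s *\<^sub>R s) \<in> convex_cone hull S"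
  proof -
    fix T assume "T \<subseteq> S"
    then have "finite T" using fS finite_subset by blast
    then show "T \<subseteq> S \<Longrightarrow> (\<Sum>s\<in>T. c s *\<^sub>R s) \<in> convex_cone hull S"
    proof (induction T rule: finite_induct)
      case empty then show ?case by (simp add: convex_cone_hull_contains_0)
    next
      case (insert x F)
      then show ?case
        by (simp add: convex_cone_hull_add convex_cone_hull_mul hull_inc c(1))
    qed
  qed
  then show "y \<in> convex_cone hull S" using c by blast
qed

lemma convex_cone_pos_hull: "finite S \<Longrightarrow> convex_cone (pos_hull S)"
  unfolding convex_cone_iff
proof (intro conjI ballI allI impI)
  assume fS: "finite S"
  show "0 \<in> pos_hull S" unfolding pos_hull_def by (rule CollectI, rule exI[of _ "\<lambda>_. 0"]) simp
  fix x y assume "x \<in> pos_hull S" "y \<in> pos_hull S"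
  then obtain a b where a: "\<forall>s\<in>S. a s \<ge> 0" "x = (\<Sum>s\<in>S. a s *\<^sub>R s)"
    and b: "\<forall>s\<in>S. b s \<ge> 0" "y = (\<Sum>s\<in>S. b s *\<^sub>R s)" unfolding pos_hull_def by auto
  show "x + y \<in> pos_hull S" unfolding pos_hull_def
    by (rule CollectI, rule exI[of _ "\<lambda>s. a s + b s"]) (simp add: a b scaleR_add_left sum.distrib)
next
  fix x and c :: real assume "x \<in> pos_hull S" "0 \<le> c"
  then obtain a where a: "\<forall>s\<in>S. a s \<ge> 0" "x = (\<Sum>s\<in>S. a s *\<^sub>R s)" unfolding pos_hull_def by auto
  show "c *\<^sub>R x \<in> pos_hull S" unfolding pos_hull_def
    by (rule CollectI, rule exI[of _ "\<lambda>s. c * a s"]) (simp add: a \<open>0 \<le> c\<close> scaleR_sum_right)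
qed

lemma pos_hull_inc: "finite S \<Longrightarrow> x \<in> S \<Longrightarrow> x \<in> pos_hull S"
  unfolding pos_hull_def
  by (rule CollectI, rule exI[of _ "\<lambda>s. if s = x then 1 else 0"])
     (simp add: if_distrib[of "\<lambda>r. r *\<^sub>R _"] sum.delta cong: if_cong)

lemma pos_hull_eq: "finite S \<Longrightarrow> pos_hull S = convex_cone hull S"
  by (metis convex_cone_pos_hull hull_minimal pos_hull_inc pos_hull_sub subsetI subset_antisym)

lemma pos_hull_mono: "finite S \<Longrightarrow> T \<subseteq> S \<Longrightarrow> pos_hull T \<subseteq> pos_hull S"
  by (metis finite_subset hull_mono pos_hull_eq)

lemma pos_hull_single: "pos_hull {s} = {c *\<^sub>R s | c. c \<ge> 0}"
proof
  show "pos_hull {s} \<subseteq> {c *\<^sub>R s | c. c \<ge> 0}" unfolding pos_hull_def by auto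
  show "{c *\<^sub>R s | c. c \<ge> 0} \<subseteq> pos_hull {s}"
  proof
    fix x assume "x \<in> {c *\<^sub>R s | c. c \<ge> 0}"
    then obtain c where "c \<ge> 0" "x = c *\<^sub>R s" by blast
    then show "x \<in> pos_hull {s}" unfolding pos_hull_def by (intro CollectI exI[of _ "\<lambda>_. c"]) simp
  qed
qed

lemma pos_hull_decomp:
  assumes "finite T" "x \<in> pos_hull (insert s T)"
  shows "\<exists>a y. a \<ge> 0 \<and> y \<in> pos_hull T \<and> x = a *\<^sub>R s + y"
proof (cases "s \<in> T")
  case True
  then show ?thesis using assms by (auto intro!: exI[of _ 0] exI[of _ x] simp: insert_absorb)
next
  case False
  obtain c where c: "\<forall>t\<in>insert s T. c t \<ge> 0" "x = (\<Sum>t\<in>insert s T. c t *\<^sub>R t)"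
    using assms(2) unfolding pos_hull_def by auto
  have "x = c s *\<^sub>R s + (\<Sum>t\<in>T. c t *\<^sub>R t)" using c(2) False assms(1) by simp
  moreover have "(\<Sum>t\<in>T. c t *\<^sub>R t) \<in> pos_hull T" unfolding pos_hull_def using c(1) by auto
  ultimately show ?thesis using c(1) by blast
qed

lemma locally_minimal_gens:
  "finite S \<Longrightarrow> \<exists>S'\<subseteq>S. pos_hull S' = pos_hull S \<and> (\<forall>s\<in>S'. s \<notin> pos_hull (S' - {s}))"
proof (induction S rule: finite_psubset_induct)
  case (psubset A)
  show ?case
  proof (cases "\<exists>s\<in>A. s \<in> pos_hull (A - {s})")
    case True
    then obtain s where s: "s \<in> A" "s \<in> pos_hull (A - {s})" by blast
    have "pos_hull (A - {s}) = pos_hull A"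
      using s psubset.hyps
      by (metis finite_Diff finite_insert hull_redundant insert_Diff pos_hull_eq)
    moreover obtain S' where "S' \<subseteq> A - {s}" "pos_hull S' = pos_hull (A - {s})"
        "\<forall>t\<in>S'. t \<notin> pos_hull (S' - {t})"
      using psubset.IH[of "A - {s}"] s(1) by blast
    ultimately show ?thesis by blast
  qed blast
qed

lemma convex_pos_hull: "finite S \<Longrightarrow> convex (pos_hull S)"
  using convex_cone_pos_hull[of S] unfolding convex_cone_def by simp

lemma minimal_gens:
  assumes fS: "finite S" and sc: "strongly_convex (pos_hull S)"
  shows "\<exists>S'\<subseteq>S. pos_hull S' = pos_hull S \<and> (\<forall>s\<in>S'. s \<noteq> 0 \<and> pos_hull {s} face_of pos_hull S)"
proof -
  obtain S' where S': "S' \<subseteq> S" "pos_hull S' = pos_hull S" "\<forall>s\<in>S'. s \<notin> pos_hull (S' - {s})"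
    using locally_minimal_gens[OF fS] by blast
  have fS': "finite S'" using S'(1) fS by (rule finite_subset)
  define C where "C = pos_hull S"
  have ccC: "convex_cone C" unfolding C_def by (rule convex_cone_pos_hull[OF fS])
  have scC': "C \<inter> uminus ` C = {0}" using sc unfolding strongly_convex_def C_def .
  have scC: "\<And>w. w \<in> C \<Longrightarrow> -w \<in> C \<Longrightarrow> w = 0"
  proof -
    fix w assume a1: "w \<in> C" and a2: "-w \<in> C"
    have "w \<in> uminus ` C" by (rule image_eqI[where x="-w"]) (simp_all add: a2)
    then have "w \<in> C \<inter> uminus ` C" using a1 by blast
    then show "w = 0" using scC' by simp
  qed
  have "\<forall>s\<in>S'. s \<noteq> 0 \<and> pos_hull {s} face_of C"
  proof
    fix s assume sS: "s \<in> S'"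
    define T where "T = S' - {s}"
    have fT: "finite T" unfolding T_def using fS' by simp
    have sP: "s \<notin> pos_hull T" unfolding T_def using S'(3) sS by simp
    have ccP: "convex_cone (pos_hull T)" using fT convex_cone_pos_hull by blast
    have "pos_hull T \<subseteq> pos_hull S'" using pos_hull_mono[OF fS', of T] unfolding T_def by blast
    then have PC: "pos_hull T \<subseteq> C" unfolding C_def S'(2) .
    have ins: "insert s T = S'" unfolding T_def using sS by auto
    have s0: "s \<noteq> 0" using sP convex_cone_contains_0[OF ccP] by blast
    have sC: "s \<in> C" using pos_hull_inc[OF fS' sS] S'(2) C_def by blast
    have RC: "pos_hull {s} \<subseteq> C"
      using sC ccC by (auto simp: pos_hull_single convex_cone_iff)
    have "pos_hull {s} face_of C"
      unfolding face_of_def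
    proof (intro conjI ballI impI)
      show "pos_hull {s} \<subseteq> C" by (rule RC)
      show "convex (pos_hull {s})" by (simp add: convex_pos_hull)
      fix a b x assume aC: "a \<in> C" and bC: "b \<in> C" and xR: "x \<in> pos_hull {s}" and xab: "x \<in> open_segment a b"
      obtain u where u: "0 < u" "u < 1" "x = (1 - u) *\<^sub>R a + u *\<^sub>R b" using xab by (auto simp: in_segment)
      obtain l where l: "l \<ge> 0" "x = l *\<^sub>R s" using xR by (auto simp: pos_hull_single)
      obtain \<alpha> a' where a': "\<alpha> \<ge> 0" "a' \<in> pos_hull T" "a = \<alpha> *\<^sub>R s + a'"
        using pos_hull_decomp[OF fT, of a s] aC ins S'(2) C_def by auto
      obtain \<beta> b' where b': "\<beta> \<ge> 0" "b' \<in> pos_hull T" "b = \<beta> *\<^sub>R s + b'"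
        using pos_hull_decomp[OF fT, of b s] bC ins S'(2) C_def by auto
      define w where "w = (1 - u) *\<^sub>R a' + u *\<^sub>R b'"
      have wP: "w \<in> pos_hull T" unfolding w_def using ccP a'(2) b'(2) u
        by (simp add: convex_cone_iff)
      define \<gamma> where "\<gamma> = l - (1 - u) * \<alpha> - u * \<beta>"
      have "w = x - ((1 - u) * \<alpha> + u * \<beta>) *\<^sub>R s"
        unfolding w_def u(3) a'(3) b'(3) by (simp add: algebra_simps)
      then have wg: "w = \<gamma> *\<^sub>R s"
        unfolding l(2) \<gamma>_def by (simp add: algebra_simps)
      have "\<not> \<gamma> > 0"
      proof
        assume "\<gamma> > 0"
        then have "s = (1 / \<gamma>) *\<^sub>R w" using wg by simp
        then have "s \<in> pos_hull T" using ccP wP \<open>\<gamma> > 0\<close> by (simp add: convex_cone_iff)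
        then show False using sP by blast
      qed
      then have "0 \<le> -\<gamma>" by simp
      then have "(-\<gamma>) *\<^sub>R s \<in> C" using ccC sC unfolding convex_cone_iff by blast
      then have "-w \<in> C" using wg by simp
      then have w0: "w = 0" using scC wP PC by blast
      have a'C: "(1 - u) *\<^sub>R a' \<in> C" using PC a'(2) ccC u by (auto simp: convex_cone_iff)
      have b'C: "u *\<^sub>R b' \<in> C" using PC b'(2) ccC u by (auto simp: convex_cone_iff)
      have "(1 - u) *\<^sub>R a' = - (u *\<^sub>R b')" using w0 unfolding w_def by (simp add: eq_neg_iff_add_eq_0)
      then have "(1 - u) *\<^sub>R a' = 0" using scC a'C b'C by (metis minus_minus)
      then have a'0: "a' = 0" using u by simp
      have "u *\<^sub>R b' = 0" using w0 a'0 unfolding w_def by simp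
      then have b'0: "b' = 0" using u by simp
      show "a \<in> pos_hull {s}" using a' a'0 by (auto simp: pos_hull_single)
      show "b \<in> pos_hull {s}" using b' b'0 by (auto simp: pos_hull_single)
    qed
    then show "s \<noteq> 0 \<and> pos_hull {s} face_of C" using s0 by blast
  qed
  then show ?thesis using S' C_def by blast
qed

lemma lattice_pt_add: "lattice_pt a \<Longrightarrow> lattice_pt b \<Longrightarrow> lattice_pt (a + b)"
  unfolding lattice_pt_def by auto
lemma lattice_pt_diff: "lattice_pt a \<Longrightarrow> lattice_pt b \<Longrightarrow> lattice_pt (a - b)"
  unfolding lattice_pt_def by auto
lemma lattice_pt_0: "lattice_pt 0"
  unfolding lattice_pt_def by auto
lemma lattice_pt_scale_int: "lattice_pt a \<Longrightarrow> lattice_pt (of_int k *\<^sub>R a)"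
  unfolding lattice_pt_def by auto
lemma lattice_pt_scale_nat: "lattice_pt a \<Longrightarrow> lattice_pt (real k *\<^sub>R a)"
  using lattice_pt_scale_int[of a "int k"] by simp
lemma lattice_pt_sum: "(\<And>x. x \<in> A \<Longrightarrow> lattice_pt (f x)) \<Longrightarrow> lattice_pt (\<Sum>x\<in>A. f x)"
proof (induction A rule: infinite_finite_induct)
  case (infinite A) then show ?case by (simp add: lattice_pt_0)
next
  case empty then show ?case by (simp add: lattice_pt_0)
next
  case (insert x F) then show ?case by (simp add: lattice_pt_add)
qed
lemma lattice_pt_int_comb: "(\<And>x. x \<in> A \<Longrightarrow> lattice_pt (f x)) \<Longrightarrow> lattice_pt (\<Sum>x\<in>A. of_int (c x) *\<^sub>R f x)"
  by (rule lattice_pt_sum) (simp add: lattice_pt_scale_int)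

lemma prim_exists:
  fixes s :: "real^'n"
  assumes ls: "lattice_pt s" and s0: "s \<noteq> 0"
  shows "\<exists>u. u \<in> pos_hull {s} \<and> lattice_pt u \<and> u \<noteq> 0 \<and>
           (\<forall>v\<in>pos_hull {s}. lattice_pt v \<longrightarrow> (\<exists>k::nat. v = real k *\<^sub>R u))"
proof -
  obtain i where si: "s $ i \<noteq> 0" using s0 by (metis vec_eq_iff zero_index)
  obtain z where z: "s $ i = of_int z" using ls unfolding lattice_pt_def by (metis Ints_cases)
  define d where "d = nat \<bar>z\<bar>"
  have d0: "d > 0" using si z d_def by auto
  have rd: "real d = \<bar>s $ i\<bar>" using z d_def by simp
  define M where "M = {m::nat. 0 < m \<and> lattice_pt ((real m / real d) *\<^sub>R s)}"
  have dM: "d \<in> M" unfolding M_def using d0 ls by simp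
  define m0 where "m0 = (LEAST m. m \<in> M)"
  have m0M: "m0 \<in> M" unfolding m0_def using dM by (rule LeastI)
  have m0min: "\<And>m. m \<in> M \<Longrightarrow> m0 \<le> m" unfolding m0_def by (rule Least_le)
  define u where "u = (real m0 / real d) *\<^sub>R s"
  have m0pos: "m0 > 0" and lu: "lattice_pt u" using m0M unfolding M_def u_def by auto
  have u0: "u \<noteq> 0" unfolding u_def using m0pos d0 s0 by simp
  have uP: "u \<in> pos_hull {s}" unfolding u_def pos_hull_single by auto
  have "\<forall>v\<in>pos_hull {s}. lattice_pt v \<longrightarrow> (\<exists>k::nat. v = real k *\<^sub>R u)"
  proof (intro ballI impI)
    fix v assume vP: "v \<in> pos_hull {s}" and lv: "lattice_pt v"
    obtain c where c: "c \<ge> 0" "v = c *\<^sub>R s" using vP unfolding pos_hull_single by auto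
    have "v $ i \<in> \<int>" using lv unfolding lattice_pt_def by blast
    then have csI: "c * s $ i \<in> \<int>" using c by simp
    have "c * real d = \<bar>c * s $ i\<bar>" using rd c by (simp add: abs_mult)
    then have cdI: "c * real d \<in> \<int>" using csI by (simp add: Ints_abs)
    then obtain k where k: "c * real d = of_int k" by (rule Ints_cases)
    have "k \<ge> 0" using k c d0 by (metis of_int_0_le_iff zero_le_mult_iff of_nat_0_le_iff)
    then have m': "c * real d = real (nat k)" using k by simp
    define m where "m = nat k"
    have m: "c * real d = real m" using m' m_def by simp
    have "c = real m / real d" using m d0 by (simp add: eq_divide_eq)
    then have vm: "v = (real m / real d) *\<^sub>R s" using c by simp
    define q where "q = m div m0"
    define r where "r = m mod m0"
    have mqr: "m = q * m0 + r" unfolding q_def r_def by simp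
    have rlt: "r < m0" unfolding r_def using m0pos by simp
    have sc: "real (q*m0+r) / real d - real q * (real m0 / real d) = real r / real d"
      by (simp add: field_simps add_divide_distrib)
    have "v - real q *\<^sub>R u = (real (q*m0+r) / real d - real q * (real m0 / real d)) *\<^sub>R s"
      unfolding vm u_def mqr by (simp only: scaleR_diff_left scaleR_scaleR)
    then have eqr: "(real r / real d) *\<^sub>R s = v - real q *\<^sub>R u" unfolding sc by simp
    have "lattice_pt (v - real q *\<^sub>R u)"
      using lv lu by (simp add: lattice_pt_diff lattice_pt_scale_nat)
    then have lr: "lattice_pt ((real r / real d) *\<^sub>R s)" unfolding eqr .
    have "r = 0"
    proof (rule ccontr)
      assume "r \<noteq> 0"
      then have "r \<in> M" unfolding M_def using lr by simp
      then have "m0 \<le> r" by (rule m0min)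
      then show False using rlt by simp
    qed
    then have "v = real q *\<^sub>R u" using eqr by simp
    then show "\<exists>k::nat. v = real k *\<^sub>R u" by blast
  qed
  then show ?thesis using uP lu u0 by blast
qed

lemma fan_cone:
  assumes "fan \<Sigma>" "\<sigma> \<in> \<Sigma>"
  shows "\<exists>S. finite S \<and> S \<subseteq> lattice \<and> \<sigma> = pos_hull S \<and> strongly_convex \<sigma>"
proof -
  have "\<forall>\<sigma>\<in>\<Sigma>. rat_poly_cone \<sigma> \<and> strongly_convex \<sigma>" using assms(1) unfolding fan_def by simp
  then have "rat_poly_cone \<sigma> \<and> strongly_convex \<sigma>" using assms(2) by simp
  then show ?thesis unfolding rat_poly_cone_def by simp
qed

lemma pos_hull_empty: "pos_hull {} = {0}"
  unfolding pos_hull_def by simp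

lemma aff_dim_pos_hull_single:
  fixes s :: "real^'n"
  assumes "s \<noteq> 0" shows "aff_dim (pos_hull {s}) \<ge> 1"
proof -
  have "0 \<in> pos_hull {s}" using convex_cone_contains_0[OF convex_cone_pos_hull[of "{s}"]] by simp
  moreover have "s \<in> pos_hull {s}" by (rule pos_hull_inc) simp_all
  ultimately have "{0, s} \<subseteq> pos_hull {s}" by simp
  then have "aff_dim {0, s} \<le> aff_dim (pos_hull {s})" by (rule aff_dim_subset)
  then show ?thesis using assms by simp
qed

lemma ray_gen:
  assumes fan: "fan \<Sigma>" and r: "\<rho> \<in> rays \<Sigma>"
  shows "\<exists>s. lattice_pt s \<and> s \<noteq> 0 \<and> \<rho> = pos_hull {s}"
proof -
  have rS: "\<rho> \<in> \<Sigma>" and ad: "aff_dim \<rho> = 1" using r unfolding rays_def by auto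
  obtain S where S: "finite S" "S \<subseteq> lattice" "\<rho> = pos_hull S" "strongly_convex \<rho>"
    using fan_cone[OF fan rS] by blast
  obtain S' where S': "S' \<subseteq> S" "pos_hull S' = pos_hull S"
      "\<forall>s\<in>S'. s \<noteq> 0 \<and> pos_hull {s} face_of pos_hull S"
    using minimal_gens[OF S(1)] S(3,4) by auto
  have "S' \<noteq> {}"
  proof
    assume "S' = {}"
    have "\<rho> = pos_hull S'" using S'(2) S(3) by simp
    then have "\<rho> = {0}" using \<open>S' = {}\<close> pos_hull_empty by simp
    then show False using ad by simp
  qed
  then obtain s where sS: "s \<in> S'" by blast
  have s0: "s \<noteq> 0" and fc: "pos_hull {s} face_of \<rho>" using S'(3) sS S(3) by auto
  have "pos_hull {s} = \<rho>"
  proof (rule ccontr)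
    assume "pos_hull {s} \<noteq> \<rho>"
    then have "aff_dim (pos_hull {s}) < aff_dim \<rho>"
      using face_of_aff_dim_lt[OF _ fc] convex_pos_hull S(1,3) by blast
    then show False using ad aff_dim_pos_hull_single[OF s0] by simp
  qed
  moreover have "lattice_pt s" using sS S'(1) S(2) unfolding lattice_def by blast
  ultimately show ?thesis using s0 by blast
qed

definition is_prim :: "(real^'n) set \<Rightarrow> real^'n \<Rightarrow> bool" where
  "is_prim \<rho> u \<longleftrightarrow> u \<in> \<rho> \<and> lattice_pt u \<and> u \<noteq> 0 \<and>
      (\<forall>v\<in>\<rho>. lattice_pt v \<longrightarrow> (\<exists>k::nat. v = real k *\<^sub>R u))"

lemma is_prim_unique:
  assumes "is_prim \<rho> u" "is_prim \<rho> u'" shows "u = u'"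
proof -
  obtain k :: nat where k: "u' = real k *\<^sub>R u" using assms unfolding is_prim_def by blast
  obtain k' :: nat where k': "u = real k' *\<^sub>R u'" using assms unfolding is_prim_def by blast
  have "u = real k' *\<^sub>R (real k *\<^sub>R u)" unfolding k[symmetric] by (rule k')
  then have "u = (real k' * real k) *\<^sub>R u" by simp
  then have "(real k' * real k - 1) *\<^sub>R u = 0" by (simp add: algebra_simps)
  then have "real k' * real k = 1" using assms(1) unfolding is_prim_def by simp
  then have "real (k' * k) = 1" by simp
  then have "k' * k = 1" by (simp only: of_nat_eq_1_iff)
  then have "k = 1" by simp
  then show ?thesis using k by simp
qed

lemma prim_gen_props:
  assumes fan: "fan \<Sigma>" and r: "\<rho> \<in> rays \<Sigma>"
  shows "prim_gen \<rho> \<in> \<rho>" "lattice_pt (prim_gen \<rho>)" "prim_gen \<rho> \<noteq> 0"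
    "\<And>v. v \<in> \<rho> \<Longrightarrow> lattice_pt v \<Longrightarrow> \<exists>k::nat. v = real k *\<^sub>R prim_gen \<rho>"
    "\<rho> = pos_hull {prim_gen \<rho>}"
proof -
  obtain s where s: "lattice_pt s" "s \<noteq> 0" "\<rho> = pos_hull {s}" using ray_gen[OF fan r] by blast
  obtain u where u: "is_prim \<rho> u" using prim_exists[OF s(1,2)] s(3) unfolding is_prim_def by blast
  have ex1: "\<exists>!u. is_prim \<rho> u" using u is_prim_unique by blast
  have pg: "prim_gen \<rho> = (THE u. is_prim \<rho> u)" unfolding prim_gen_def is_prim_def by simp
  have P: "is_prim \<rho> (prim_gen \<rho>)" unfolding pg by (rule theI'[OF ex1])
  then show "prim_gen \<rho> \<in> \<rho>" "lattice_pt (prim_gen \<rho>)" "prim_gen \<rho> \<noteq> 0"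
    "\<And>v. v \<in> \<rho> \<Longrightarrow> lattice_pt v \<Longrightarrow> \<exists>k::nat. v = real k *\<^sub>R prim_gen \<rho>"
    unfolding is_prim_def by auto
  show "\<rho> = pos_hull {prim_gen \<rho>}"
  proof
    obtain k :: nat where k: "s = real k *\<^sub>R prim_gen \<rho>"
    proof -
      have "s \<in> \<rho>" unfolding s(3) by (rule pos_hull_inc) simp_all
      then show ?thesis using P s(1) that unfolding is_prim_def by blast
    qed
    show "\<rho> \<subseteq> pos_hull {prim_gen \<rho>}"
    proof
      fix x assume "x \<in> \<rho>"
      then obtain c where c: "c \<ge> 0" "x = c *\<^sub>R s" unfolding s(3) pos_hull_single by blast
      then have "x = (c * real k) *\<^sub>R prim_gen \<rho>" "c * real k \<ge> 0" using k by simp_all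
      then show "x \<in> pos_hull {prim_gen \<rho>}" unfolding pos_hull_single by blast
    qed
    obtain c where c: "c \<ge> 0" "prim_gen \<rho> = c *\<^sub>R s"
      using P s(3) unfolding is_prim_def pos_hull_single by blast
    show "pos_hull {prim_gen \<rho>} \<subseteq> \<rho>"
    proof
      fix x assume "x \<in> pos_hull {prim_gen \<rho>}"
      then obtain e where e: "e \<ge> 0" "x = e *\<^sub>R prim_gen \<rho>" unfolding pos_hull_single by blast
      then have "x = (e * c) *\<^sub>R s" "e * c \<ge> 0" using c by simp_all
      then show "x \<in> \<rho>" unfolding s(3) pos_hull_single by blast
    qed
  qed
qed

lemma fan_finite: "fan \<Sigma> \<Longrightarrow> finite \<Sigma>"
  unfolding fan_def by simp

lemma fan_face_in: "fan \<Sigma> \<Longrightarrow> \<sigma> \<in> \<Sigma> \<Longrightarrow> \<tau> face_of \<sigma> \<Longrightarrow> \<tau> \<noteq> {} \<Longrightarrow> \<tau> \<in> \<Sigma>"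
proof -
  assume "fan \<Sigma>" "\<sigma> \<in> \<Sigma>" "\<tau> face_of \<sigma>" "\<tau> \<noteq> {}"
  moreover have "\<forall>\<sigma>\<in>\<Sigma>. \<forall>\<tau>. \<tau> face_of \<sigma> \<and> \<tau> \<noteq> {} \<longrightarrow> \<tau> \<in> \<Sigma>"
    using \<open>fan \<Sigma>\<close> unfolding fan_def by simp
  ultimately show "\<tau> \<in> \<Sigma>" by simp
qed

lemma fan_inter_face: "fan \<Sigma> \<Longrightarrow> \<sigma> \<in> \<Sigma> \<Longrightarrow> \<tau> \<in> \<Sigma> \<Longrightarrow> (\<sigma> \<inter> \<tau>) face_of \<sigma>"
proof -
  assume "fan \<Sigma>" "\<sigma> \<in> \<Sigma>" "\<tau> \<in> \<Sigma>"
  moreover have "\<forall>\<sigma>\<in>\<Sigma>. \<forall>\<tau>\<in>\<Sigma>. (\<sigma> \<inter> \<tau>) face_of \<sigma> \<and> (\<sigma> \<inter> \<tau>) face_of \<tau>"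
    using \<open>fan \<Sigma>\<close> unfolding fan_def by simp
  ultimately show "(\<sigma> \<inter> \<tau>) face_of \<sigma>" by simp
qed

lemma rays_finite: "fan \<Sigma> \<Longrightarrow> finite (rays \<Sigma>)"
  unfolding rays_def by (drule fan_finite) simp

lemma cone_rays_finite: "fan \<Sigma> \<Longrightarrow> finite (cone_rays \<Sigma> \<sigma>)"
  unfolding cone_rays_def by (drule rays_finite) simp

lemma pos_hull_subset_pos_hull:
  "finite A \<Longrightarrow> finite B \<Longrightarrow> A \<subseteq> pos_hull B \<Longrightarrow> pos_hull A \<subseteq> pos_hull B"
  by (simp add: pos_hull_eq hull_minimal convex_cone_convex_cone_hull)

lemma aff_dim_pos_hull_single_le:
  fixes s :: "real^'n"
  shows "aff_dim (pos_hull {s}) \<le> 1"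
proof -
  have "pos_hull {s} \<subseteq> affine hull {0, s}"
  proof
    fix x assume "x \<in> pos_hull {s}"
    then obtain c where "x = c *\<^sub>R s" unfolding pos_hull_single by blast
    then have "x = (1 - c) *\<^sub>R 0 + c *\<^sub>R s" by simp
    then show "x \<in> affine hull {0, s}" unfolding affine_hull_2 by (intro CollectI exI[of _ "1 - c"] exI[of _ c]) simp
  qed
  then have "aff_dim (pos_hull {s}) \<le> aff_dim (affine hull {0, s})" by (rule aff_dim_subset)
  also have "\<dots> \<le> 1" by simp
  finally show ?thesis .
qed

lemma cone_gen_rays:
  assumes fan: "fan \<Sigma>" and sig: "\<sigma> \<in> \<Sigma>"
  shows "\<sigma> = pos_hull (prim_gen ` cone_rays \<Sigma> \<sigma>)"
proof -
  obtain S where S: "finite S" "S \<subseteq> lattice" "\<sigma> = pos_hull S" "strongly_convex \<sigma>"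
    using fan_cone[OF fan sig] by blast
  obtain S' where S': "S' \<subseteq> S" "pos_hull S' = pos_hull S"
      "\<forall>s\<in>S'. s \<noteq> 0 \<and> pos_hull {s} face_of pos_hull S"
    using minimal_gens[OF S(1)] S(3,4) by auto
  have fS': "finite S'" using S'(1) S(1) by (rule finite_subset)
  define G where "G = prim_gen ` cone_rays \<Sigma> \<sigma>"
  have fG: "finite G" unfolding G_def using cone_rays_finite[OF fan] by simp
  have "S' \<subseteq> pos_hull G"
  proof
    fix s assume sS: "s \<in> S'"
    have s0: "s \<noteq> 0" and fc: "pos_hull {s} face_of \<sigma>" using S'(3) sS S(3) by auto
    have sin: "s \<in> pos_hull {s}" by (rule pos_hull_inc) simp_all
    have rS: "pos_hull {s} \<in> \<Sigma>" using fan_face_in[OF fan sig fc] sin by blast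
    have "aff_dim (pos_hull {s}) = 1"
      using aff_dim_pos_hull_single[OF s0] aff_dim_pos_hull_single_le[of s] by simp
    then have rr: "pos_hull {s} \<in> rays \<Sigma>" unfolding rays_def using rS by simp
    have "pos_hull {s} \<subseteq> \<sigma>" using fc face_of_imp_subset by blast
    then have rc: "pos_hull {s} \<in> cone_rays \<Sigma> \<sigma>" unfolding cone_rays_def using rr by simp
    have ls: "lattice_pt s" using sS S'(1) S(2) unfolding lattice_def by blast
    obtain k :: nat where k: "s = real k *\<^sub>R prim_gen (pos_hull {s})"
      using prim_gen_props(4)[OF fan rr sin ls] by blast
    have "prim_gen (pos_hull {s}) \<in> G" unfolding G_def using rc by simp
    then have "prim_gen (pos_hull {s}) \<in> pos_hull G" using fG by (simp add: pos_hull_inc)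
    then have "real k *\<^sub>R prim_gen (pos_hull {s}) \<in> pos_hull G"
      using convex_cone_pos_hull[OF fG] unfolding convex_cone_iff by simp
    then show "s \<in> pos_hull G" using k by simp
  qed
  then have "pos_hull S' \<subseteq> pos_hull G" using fS' fG pos_hull_subset_pos_hull by blast
  then have sub1: "\<sigma> \<subseteq> pos_hull G" using S'(2) S(3) by simp
  have "G \<subseteq> \<sigma>"
  proof
    fix g assume "g \<in> G"
    then obtain \<rho> where r: "\<rho> \<in> cone_rays \<Sigma> \<sigma>" "g = prim_gen \<rho>" unfolding G_def by blast
    then have "\<rho> \<in> rays \<Sigma>" "\<rho> \<subseteq> \<sigma>" unfolding cone_rays_def by auto
    then show "g \<in> \<sigma>" using prim_gen_props(1)[OF fan] r(2) by blast
  qed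
  then have "G \<subseteq> pos_hull S" using S(3) by simp
  then have "pos_hull G \<subseteq> \<sigma>" using S(1,3) fG pos_hull_subset_pos_hull by blast
  then show ?thesis using sub1 G_def by blast
qed

lemma Z_basis_indep:
  fixes B :: "(real^'n) set"
  assumes ZB: "Z_basis B"
  shows "independent B"
proof -
  have fB: "finite B" and BL: "B \<subseteq> lattice"
    and zi: "\<And>c :: real^'n \<Rightarrow> int. (\<Sum>b\<in>B. of_int (c b) *\<^sub>R b) = 0 \<Longrightarrow> (\<forall>b\<in>B. c b = 0)"
    and zs: "\<And>v. v \<in> lattice \<Longrightarrow> \<exists>c :: real^'n \<Rightarrow> int. v = (\<Sum>b\<in>B. of_int (c b) *\<^sub>R b)"
    using ZB unfolding Z_basis_def by auto
  have "\<forall>i. \<exists>c :: real^'n \<Rightarrow> int. axis i 1 = (\<Sum>b\<in>B. of_int (c b) *\<^sub>R b)"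
  proof
    fix i :: 'n
    have "axis i (1::real) \<in> lattice" unfolding lattice_def lattice_pt_def axis_def by auto
    then show "\<exists>c :: real^'n \<Rightarrow> int. axis i 1 = (\<Sum>b\<in>B. of_int (c b) *\<^sub>R b)" by (rule zs)
  qed
  from choice[OF this] obtain C :: "'n \<Rightarrow> real^'n \<Rightarrow> int" where C0: "\<forall>i. axis i 1 = (\<Sum>b\<in>B. of_int (C i b) *\<^sub>R b)"
    by blast
  then have C: "\<And>i. axis i 1 = (\<Sum>b\<in>B. of_int (C i b) *\<^sub>R b)" by blast
  define z :: "real^'n \<Rightarrow> 'n \<Rightarrow> int" where "z b i = \<lfloor>b $ i\<rfloor>" for b i
  have bz: "b $ i = of_int (z b i)" if "b \<in> B" for b i
  proof -
    have "b $ i \<in> \<int>" using that BL unfolding lattice_def lattice_pt_def by blast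
    then obtain k where "b $ i = of_int k" by (rule Ints_cases)
    then show ?thesis unfolding z_def by simp
  qed
  have expand: "b = (\<Sum>b''\<in>B. of_int (\<Sum>i\<in>UNIV. z b i * C i b'') *\<^sub>R b'')" if "b \<in> B" for b
  proof -
    have "b = (\<Sum>i\<in>UNIV. (b $ i) *\<^sub>R axis i 1)"
      using basis_expansion[of b] by (simp add: scalar_mult_eq_scaleR)
    also have "\<dots> = (\<Sum>i\<in>UNIV. of_int (z b i) *\<^sub>R (\<Sum>b''\<in>B. of_int (C i b'') *\<^sub>R b''))"
      using bz[OF that] C by simp
    also have "\<dots> = (\<Sum>i\<in>UNIV. \<Sum>b''\<in>B. (of_int (z b i) * of_int (C i b'')) *\<^sub>R b'')"
      by (simp add: scaleR_sum_right)
    also have "\<dots> = (\<Sum>b''\<in>B. \<Sum>i\<in>UNIV. (of_int (z b i) * of_int (C i b'')) *\<^sub>R b'')"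
      by (rule sum.swap)
    also have "\<dots> = (\<Sum>b''\<in>B. of_int (\<Sum>i\<in>UNIV. z b i * C i b'') *\<^sub>R b'')"
      by (simp add: scaleR_sum_left)
    finally show ?thesis .
  qed
  have delta: "(\<Sum>i\<in>UNIV. z b i * C i b') = (if b' = b then 1 else 0)" if "b \<in> B" "b' \<in> B" for b b'
  proof -
    define D where "D b'' = (\<Sum>i\<in>UNIV. z b i * C i b'') - (if b'' = b then 1 else 0)" for b''
    have "(\<Sum>b''\<in>B. of_int (D b'') *\<^sub>R b'') =
          (\<Sum>b''\<in>B. of_int (\<Sum>i\<in>UNIV. z b i * C i b'') *\<^sub>R b'') - (\<Sum>b''\<in>B. of_int (if b'' = b then 1 else 0) *\<^sub>R b'')"
      unfolding D_def by (simp add: scaleR_diff_left sum_subtractf)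
    also have "(\<Sum>b''\<in>B. of_int (if b'' = b then 1 else 0) *\<^sub>R b'') = b"
    proof -
      have "(\<Sum>b''\<in>B. of_int (if b'' = b then 1 else 0) *\<^sub>R b'') = (\<Sum>b''\<in>B. if b'' = b then b'' else 0)"
        by (rule sum.cong) auto
      also have "\<dots> = b" using that(1) fB by (simp add: sum.delta')
      finally show ?thesis .
    qed
    finally have "(\<Sum>b''\<in>B. of_int (D b'') *\<^sub>R b'') = 0" using expand[OF that(1)] by simp
    then have "\<forall>b\<in>B. D b = 0" by (rule zi)
    then have "D b' = 0" using that(2) by simp
    then show ?thesis unfolding D_def by simp
  qed
  define \<phi> where "\<phi> b' v = (\<Sum>i\<in>UNIV. v $ i * of_int (C i b'))" for b' and v :: "real^'n"
  have phib: "\<phi> b' b = (if b' = b then 1 else 0)" if "b \<in> B" "b' \<in> B" for b b'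
  proof -
    have "\<phi> b' b = of_int (\<Sum>i\<in>UNIV. z b i * C i b')" unfolding \<phi>_def using bz[OF that(1)] by simp
    then show ?thesis using delta[OF that] by simp
  qed
  have philin: "\<phi> b' (\<Sum>b\<in>B. r b *\<^sub>R b) = (\<Sum>b\<in>B. r b * \<phi> b' b)" for b' r
  proof -
    have "\<phi> b' (\<Sum>b\<in>B. r b *\<^sub>R b) = (\<Sum>i\<in>UNIV. (\<Sum>b\<in>B. r b * b $ i) * of_int (C i b'))"
      unfolding \<phi>_def by simp
    also have "\<dots> = (\<Sum>i\<in>UNIV. \<Sum>b\<in>B. r b * (b $ i * of_int (C i b')))"
      by (simp add: sum_distrib_right mult.assoc)
    also have "\<dots> = (\<Sum>b\<in>B. \<Sum>i\<in>UNIV. r b * (b $ i * of_int (C i b')))" by (rule sum.swap)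
    also have "\<dots> = (\<Sum>b\<in>B. r b * \<phi> b' b)" unfolding \<phi>_def by (simp add: sum_distrib_left)
    finally show ?thesis .
  qed
  show ?thesis
  proof
    assume "dependent B"
    then obtain r where r: "\<exists>v\<in>B. r v \<noteq> 0" "(\<Sum>v\<in>B. r v *\<^sub>R v) = 0"
      using real_vector.dependent_finite[OF fB] by blast
    obtain b' where b': "b' \<in> B" "r b' \<noteq> 0" using r(1) by blast
    have "\<phi> b' (\<Sum>v\<in>B. r v *\<^sub>R v) = 0" using r(2) unfolding \<phi>_def by simp
    then have "(\<Sum>b\<in>B. r b * \<phi> b' b) = 0" using philin by simp
    moreover have "(\<Sum>b\<in>B. r b * \<phi> b' b) = (\<Sum>b\<in>B. r b * (if b' = b then 1 else 0))"
      by (rule sum.cong) (simp_all add: phib b'(1))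
    ultimately have "(\<Sum>b\<in>B. r b * (if b' = b then 1 else 0)) = 0" by simp
    then have "r b' = 0" using b'(1) fB by (simp add: if_distrib[of "\<lambda>x. _ * x"] sum.delta cong: if_cong)
    then show False using b'(2) by simp
  qed
qed

lemma prim_gen_inj: "fan \<Sigma> \<Longrightarrow> inj_on prim_gen (rays \<Sigma>)"
  by (rule inj_onI) (metis prim_gen_props(5))

lemma pos_hull_linear_image:
  "linear f \<Longrightarrow> finite S \<Longrightarrow> pos_hull (f ` S) = f ` pos_hull S"
  by (simp add: pos_hull_eq convex_cone_hull_linear_image)

lemma pos_hull_span: "finite S \<Longrightarrow> pos_hull S \<subseteq> span S"
  by (simp add: pos_hull_eq hull_minimal convex_cone_span span_superset)

lemma closed_pos_hull: "finite S \<Longrightarrow> closed (pos_hull (S :: (real^'n) set))"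
  by (simp add: pos_hull_eq closed_convex_cone_hull)

lemma indep_coeffs:
  fixes T :: "(real^'n) set"
  assumes "finite T" "independent T" "(\<Sum>t\<in>T. f t *\<^sub>R t) = (\<Sum>t\<in>T. g t *\<^sub>R t)" "t \<in> T"
  shows "f t = g t"
proof (rule ccontr)
  assume ne: "f t \<noteq> g t"
  have "(\<Sum>v\<in>T. (f v - g v) *\<^sub>R v) = 0"
    using assms(3) by (simp add: scaleR_diff_left sum_subtractf)
  then have "dependent T" using real_vector.dependent_finite[OF assms(1)] ne assms(4)
    by (metis right_minus_eq)
  then show False using assms(2) by simp
qed

lemma simplicial_face:
  fixes T :: "(real^'n) set"
  assumes fT: "finite T" and iT: "independent T" and sub: "T' \<subseteq> T"
  shows "pos_hull T' face_of pos_hull T"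
  unfolding face_of_def
proof (intro conjI ballI impI)
  have fT': "finite T'" using sub fT by (rule finite_subset)
  show "pos_hull T' \<subseteq> pos_hull T" using pos_hull_mono[OF fT sub] .
  show "convex (pos_hull T')" using convex_pos_hull[OF fT'] .
  fix a b x assume aT: "a \<in> pos_hull T" and bT: "b \<in> pos_hull T" and xT: "x \<in> pos_hull T'"
    and xab: "x \<in> open_segment a b"
  obtain u where u: "0 < u" "u < 1" "x = (1 - u) *\<^sub>R a + u *\<^sub>R b" using xab by (auto simp: in_segment)
  obtain \<alpha> where \<alpha>: "\<forall>t\<in>T. \<alpha> t \<ge> 0" "a = (\<Sum>t\<in>T. \<alpha> t *\<^sub>R t)" using aT unfolding pos_hull_def by blast
  obtain \<beta> where \<beta>: "\<forall>t\<in>T. \<beta> t \<ge> 0" "b = (\<Sum>t\<in>T. \<beta> t *\<^sub>R t)" using bT unfolding pos_hull_def by blast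
  obtain \<xi> where \<xi>: "\<forall>t\<in>T'. \<xi> t \<ge> 0" "x = (\<Sum>t\<in>T'. \<xi> t *\<^sub>R t)" using xT unfolding pos_hull_def by blast
  define \<xi>' where "\<xi>' t = (if t \<in> T' then \<xi> t else 0)" for t
  have "x = (\<Sum>t\<in>T'. \<xi>' t *\<^sub>R t)" unfolding \<xi>(2) \<xi>'_def by (rule sum.cong) auto
  also have "\<dots> = (\<Sum>t\<in>T. \<xi>' t *\<^sub>R t)"
    by (rule sum.mono_neutral_left[OF fT sub]) (simp add: \<xi>'_def)
  finally have x1: "x = (\<Sum>t\<in>T. \<xi>' t *\<^sub>R t)" .
  have x2: "x = (\<Sum>t\<in>T. ((1 - u) * \<alpha> t + u * \<beta> t) *\<^sub>R t)"
    unfolding u(3) \<alpha>(2) \<beta>(2) by (simp add: scaleR_sum_right scaleR_add_left sum.distrib)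
  have z: "\<alpha> t = 0 \<and> \<beta> t = 0" if "t \<in> T - T'" for t
  proof -
    have "(1 - u) * \<alpha> t + u * \<beta> t = \<xi>' t"
      using indep_coeffs[OF fT iT, of "\<lambda>t. (1 - u) * \<alpha> t + u * \<beta> t" \<xi>' t] x1 x2 that by simp
    then have e: "(1 - u) * \<alpha> t + u * \<beta> t = 0" using that unfolding \<xi>'_def by simp
    have "(1 - u) * \<alpha> t \<ge> 0" "u * \<beta> t \<ge> 0" using u \<alpha>(1) \<beta>(1) that by simp_all
    then have "(1 - u) * \<alpha> t = 0" "u * \<beta> t = 0" using e by linarith+
    then show ?thesis using u by simp
  qed
  have "a = (\<Sum>t\<in>T'. \<alpha> t *\<^sub>R t)" unfolding \<alpha>(2)
    by (rule sum.mono_neutral_right[OF fT sub]) (simp add: z)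
  then show "a \<in> pos_hull T'" unfolding pos_hull_def using \<alpha>(1) sub by blast
  have "b = (\<Sum>t\<in>T'. \<beta> t *\<^sub>R t)" unfolding \<beta>(2)
    by (rule sum.mono_neutral_right[OF fT sub]) (simp add: z)
  then show "b \<in> pos_hull T'" unfolding pos_hull_def using \<beta>(1) sub by blast
qed

lemma fan_closed: "fan \<Sigma> \<Longrightarrow> \<tau> \<in> \<Sigma> \<Longrightarrow> closed \<tau>"
  using fan_cone closed_pos_hull by metis

lemma maximal_full:
  assumes cf: "complete_fan \<Sigma>" and mx: "maximal_cone \<Sigma> \<sigma>"
  shows "span (prim_gen ` cone_rays \<Sigma> \<sigma>) = UNIV"
proof (rule ccontr)
  have fan: "fan \<Sigma>" and cov: "\<Union>\<Sigma> = UNIV" using cf unfolding complete_fan_def by auto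
  have sig: "\<sigma> \<in> \<Sigma>" and nmx: "\<not> (\<exists>\<tau>\<in>\<Sigma>. \<sigma> \<subset> \<tau>)" using mx unfolding maximal_cone_def by auto
  define G where "G = prim_gen ` cone_rays \<Sigma> \<sigma>"
  have fG: "finite G" unfolding G_def using cone_rays_finite[OF fan] by simp
  have sG: "\<sigma> = pos_hull G" unfolding G_def by (rule cone_gen_rays[OF fan sig])
  have sspan: "\<sigma> \<subseteq> span G" using sG pos_hull_span[OF fG] by simp
  assume "span (prim_gen ` cone_rays \<Sigma> \<sigma>) \<noteq> UNIV"
  then obtain y where y: "y \<notin> span G" unfolding G_def by blast
  have y0: "y \<noteq> 0" using y span_zero by metis
  have cs: "convex \<sigma>" using sG convex_pos_hull[OF fG] by simp
  have "0 \<in> \<sigma>" using sG convex_cone_contains_0[OF convex_cone_pos_hull[OF fG]] by simp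
  then have "rel_interior \<sigma> \<noteq> {}" using rel_interior_eq_empty[OF cs] by blast
  then obtain x where xr: "x \<in> rel_interior \<sigma>" by blast
  have xs: "x \<in> \<sigma>" using xr rel_interior_subset by blast
  define U where "U = \<Union>{\<tau>\<in>\<Sigma>. x \<notin> \<tau>}"
  have "closed U" unfolding U_def
    using fan_finite[OF fan] fan_closed[OF fan] by (intro closed_Union) auto
  then have "open (- U)" by (simp add: open_Compl)
  moreover have "x \<in> - U" unfolding U_def by blast
  ultimately obtain r where r: "r > 0" "ball x r \<subseteq> - U" using open_contains_ball by blast
  define z where "z = x + (r / (2 * norm y)) *\<^sub>R y"
  have "dist x z = r / 2" unfolding z_def dist_norm using y0 r(1) by simp
  then have "z \<in> ball x r" using r(1) by simp
  then have zU: "z \<notin> U" using r(2) by blast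
  obtain \<tau> where \<tau>: "\<tau> \<in> \<Sigma>" "z \<in> \<tau>" using cov by blast
  have x\<tau>: "x \<in> \<tau>" using zU \<tau> unfolding U_def by blast
  have fc: "(\<sigma> \<inter> \<tau>) face_of \<sigma>" by (rule fan_inter_face[OF fan sig \<tau>(1)])
  have "\<sigma> \<subseteq> \<sigma> \<inter> \<tau>" using subset_of_face_of[OF fc subset_refl] xr xs x\<tau> by blast
  then have s\<tau>: "\<sigma> \<subseteq> \<tau>" by blast
  have "z \<notin> \<sigma>"
  proof
    assume "z \<in> \<sigma>"
    then have "z - x \<in> span G" using xs sspan by (simp add: span_diff subsetD)
    then have "(r / (2 * norm y)) *\<^sub>R y \<in> span G" unfolding z_def by simp
    then have "(2 * norm y / r) *\<^sub>R ((r / (2 * norm y)) *\<^sub>R y) \<in> span G" by (rule span_mul)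
    then show False using y y0 r(1) by simp
  qed
  then have "\<sigma> \<subset> \<tau>" using s\<tau> \<tau>(2) by blast
  then show False using nmx \<tau>(1) by blast
qed

lemma min_nonP:
  "finite C \<Longrightarrow> \<not> P C \<Longrightarrow> \<exists>C'\<subseteq>C. \<not> P C' \<and> (\<forall>C''. C'' \<subset> C' \<longrightarrow> P C'')"
proof (induction C rule: finite_psubset_induct)
  case (psubset A)
  show ?case
  proof (cases "\<forall>C''. C'' \<subset> A \<longrightarrow> P C''")
    case True then show ?thesis using psubset.prems by blast
  next
    case False
    then obtain A' where A': "A' \<subset> A" "\<not> P A'" by blast
    then obtain C' where "C' \<subseteq> A'" "\<not> P C'" "\<forall>C''. C'' \<subset> C' \<longrightarrow> P C''"
      using psubset.IH by blast
    then show ?thesis using A'(1) by blast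
  qed
qed

lemma K_char:
  assumes fan: "fan \<Sigma>" and C: "C \<subseteq> rays \<Sigma>"
  shows "(\<exists>\<sigma>\<in>\<Sigma>. C \<subseteq> cone_rays \<Sigma> \<sigma>) \<longleftrightarrow> \<not> (\<exists>C'\<subseteq>C. primitive_collection \<Sigma> C')"
proof
  assume "\<exists>\<sigma>\<in>\<Sigma>. C \<subseteq> cone_rays \<Sigma> \<sigma>"
  then show "\<not> (\<exists>C'\<subseteq>C. primitive_collection \<Sigma> C')"
    unfolding primitive_collection_def by blast
next
  assume np: "\<not> (\<exists>C'\<subseteq>C. primitive_collection \<Sigma> C')"
  show "\<exists>\<sigma>\<in>\<Sigma>. C \<subseteq> cone_rays \<Sigma> \<sigma>"
  proof (rule ccontr)
    assume nk: "\<not> (\<exists>\<sigma>\<in>\<Sigma>. C \<subseteq> cone_rays \<Sigma> \<sigma>)"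
    have fC: "finite C" using C rays_finite[OF fan] by (rule finite_subset)
    obtain C' where C': "C' \<subseteq> C" "\<not> (\<exists>\<sigma>\<in>\<Sigma>. C' \<subseteq> cone_rays \<Sigma> \<sigma>)"
        "\<forall>C''. C'' \<subset> C' \<longrightarrow> (\<exists>\<sigma>\<in>\<Sigma>. C'' \<subseteq> cone_rays \<Sigma> \<sigma>)"
      using min_nonP[OF fC, of "\<lambda>D. \<exists>\<sigma>\<in>\<Sigma>. D \<subseteq> cone_rays \<Sigma> \<sigma>"] nk by blast
    have "primitive_collection \<Sigma> C'" unfolding primitive_collection_def
      using C'(1) C C'(2,3) by blast
    then show False using np C'(1) by blast
  qed
qed

lemma K_corr:
  assumes amp: "amply_equivalent \<Sigma>1 \<Sigma>2 \<Psi>" and C: "C \<subseteq> rays \<Sigma>1"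
  shows "(\<exists>\<sigma>\<in>\<Sigma>1. C \<subseteq> cone_rays \<Sigma>1 \<sigma>) \<longleftrightarrow> (\<exists>\<tau>\<in>\<Sigma>2. \<Psi> ` C \<subseteq> cone_rays \<Sigma>2 \<tau>)"
proof -
  have cf1: "complete_fan \<Sigma>1" and cf2: "complete_fan \<Sigma>2"
    and bij: "bij_betw \<Psi> (rays \<Sigma>1) (rays \<Sigma>2)"
    and pc: "\<forall>C. C \<subseteq> rays \<Sigma>1 \<longrightarrow> (primitive_collection \<Sigma>1 C \<longleftrightarrow> primitive_collection \<Sigma>2 (\<Psi> ` C))"
    using amp unfolding amply_equivalent_def by auto
  have fan1: "fan \<Sigma>1" and fan2: "fan \<Sigma>2" using cf1 cf2 unfolding complete_fan_def by auto
  have PC: "\<Psi> ` C \<subseteq> rays \<Sigma>2" using C bij unfolding bij_betw_def by blast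
  have "(\<exists>C'\<subseteq>C. primitive_collection \<Sigma>1 C') \<longleftrightarrow> (\<exists>D\<subseteq>\<Psi> ` C. primitive_collection \<Sigma>2 D)"
  proof
    assume "\<exists>C'\<subseteq>C. primitive_collection \<Sigma>1 C'"
    then obtain C' where "C' \<subseteq> C" "primitive_collection \<Sigma>1 C'" by blast
    then show "\<exists>D\<subseteq>\<Psi> ` C. primitive_collection \<Sigma>2 D" using pc C by blast
  next
    assume "\<exists>D\<subseteq>\<Psi> ` C. primitive_collection \<Sigma>2 D"
    then obtain D where D: "D \<subseteq> \<Psi> ` C" "primitive_collection \<Sigma>2 D" by blast
    define C' where "C' = {c\<in>C. \<Psi> c \<in> D}"
    have "\<Psi> ` C' = D" unfolding C'_def using D(1) by blast
    moreover have "C' \<subseteq> rays \<Sigma>1" "C' \<subseteq> C" unfolding C'_def using C by auto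
    ultimately show "\<exists>C'\<subseteq>C. primitive_collection \<Sigma>1 C'" using pc D(2) by blast
  qed
  then show ?thesis using K_char[OF fan1 C] K_char[OF fan2 PC] by blast
qed

lemma cone_corr:
  assumes fA: "fan \<Sigma>A" and fB: "fan \<Sigma>B" and simpB: "simplicial_fan \<Sigma>B"
    and Pmap: "\<forall>\<rho>\<in>rays \<Sigma>A. \<Psi> \<rho> \<in> rays \<Sigma>B"
    and Kc: "\<forall>C. C \<subseteq> rays \<Sigma>A \<longrightarrow> (\<exists>\<sigma>\<in>\<Sigma>A. C \<subseteq> cone_rays \<Sigma>A \<sigma>) \<longrightarrow> (\<exists>\<tau>\<in>\<Sigma>B. \<Psi> ` C \<subseteq> cone_rays \<Sigma>B \<tau>)"
    and lin: "linear \<Phi>"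
    and Pu: "\<forall>\<rho>\<in>rays \<Sigma>A. \<Phi> (prim_gen \<rho>) = prim_gen (\<Psi> \<rho>)"
    and sig: "\<sigma> \<in> \<Sigma>A"
  shows "\<Phi> ` \<sigma> \<in> \<Sigma>B"
proof -
  define C where "C = cone_rays \<Sigma>A \<sigma>"
  have CR: "C \<subseteq> rays \<Sigma>A" unfolding C_def cone_rays_def by blast
  have fC: "finite C" unfolding C_def by (rule cone_rays_finite[OF fA])
  obtain \<tau> where \<tau>: "\<tau> \<in> \<Sigma>B" "\<Psi> ` C \<subseteq> cone_rays \<Sigma>B \<tau>"
    using Kc CR sig C_def by blast
  have "\<Phi> ` \<sigma> = \<Phi> ` pos_hull (prim_gen ` C)" unfolding C_def using cone_gen_rays[OF fA sig] by simp
  also have "\<dots> = pos_hull (\<Phi> ` prim_gen ` C)" using pos_hull_linear_image[OF lin] fC by simp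
  also have "\<Phi> ` prim_gen ` C = prim_gen ` \<Psi> ` C" using Pu CR by (force simp: image_image)
  finally have e: "\<Phi> ` \<sigma> = pos_hull (prim_gen ` \<Psi> ` C)" .
  define T where "T = prim_gen ` cone_rays \<Sigma>B \<tau>"
  have fT: "finite T" unfolding T_def using cone_rays_finite[OF fB] by simp
  have iT: "independent T" unfolding T_def using simpB \<tau>(1) unfolding simplicial_fan_def by blast
  have sub: "prim_gen ` \<Psi> ` C \<subseteq> T" unfolding T_def using \<tau>(2) by blast
  have "pos_hull (prim_gen ` \<Psi> ` C) face_of pos_hull T" by (rule simplicial_face[OF fT iT sub])
  then have fc: "\<Phi> ` \<sigma> face_of \<tau>" unfolding e T_def using cone_gen_rays[OF fB \<tau>(1)] by simp
  have "0 \<in> pos_hull (prim_gen ` C)"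
    using convex_cone_contains_0[OF convex_cone_pos_hull[OF finite_imageI[OF fC]]] .
  then have "0 \<in> \<sigma>" using cone_gen_rays[OF fA sig] unfolding C_def by simp
  then have "\<Phi> ` \<sigma> \<noteq> {}" by blast
  then show ?thesis using fan_face_in[OF fB \<tau>(1) fc] by blast
qed

lemma lat_map:
  fixes B :: "(real^'a) set" and F :: "real^'a \<Rightarrow> real^'a"
  assumes cf: "complete_fan \<Sigma>" and mx: "maximal_cone \<Sigma> \<sigma>" and ZB: "Z_basis B"
    and GB: "prim_gen ` cone_rays \<Sigma> \<sigma> \<subseteq> B" and lin: "linear F"
    and Fl: "\<forall>\<rho>\<in>cone_rays \<Sigma> \<sigma>. lattice_pt (F (prim_gen \<rho>))"
  shows "F ` lattice \<subseteq> lattice"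
proof -
  define G where "G = prim_gen ` cone_rays \<Sigma> \<sigma>"
  have sp: "span G = UNIV" unfolding G_def by (rule maximal_full[OF cf mx])
  have iB: "independent B" by (rule Z_basis_indep[OF ZB])
  have BG: "B = G"
  proof (rule ccontr)
    assume "B \<noteq> G"
    then obtain b where b: "b \<in> B" "b \<notin> G" using GB G_def by blast
    have "G \<subseteq> B - {b}" using GB G_def b by blast
    then have "span G \<subseteq> span (B - {b})" by (rule span_mono)
    then have "b \<in> span (B - {b})" using sp by blast
    then have "dependent B" using b(1) unfolding real_vector.dependent_def by blast
    then show False using iB by simp
  qed
  have Fb: "lattice_pt (F b)" if "b \<in> B" for b using that Fl unfolding BG G_def by blast
  show ?thesis
  proof
    fix w assume "w \<in> F ` lattice"
    then obtain v where v: "v \<in> lattice" "w = F v" by blast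
    obtain c :: "real^'a \<Rightarrow> int" where c: "v = (\<Sum>b\<in>B. of_int (c b) *\<^sub>R b)"
      using ZB v(1) unfolding Z_basis_def by blast
    have "w = (\<Sum>b\<in>B. of_int (c b) *\<^sub>R F b)" unfolding v(2) c
      by (simp add: linear_sum[OF lin] linear_scale[OF lin])
    then show "w \<in> lattice" unfolding lattice_def using Fb by (simp add: lattice_pt_int_comb)
  qed
qed

lemma Z_basis_image:
  fixes B :: "(real^'a) set" and \<Phi> :: "real^'a \<Rightarrow> real^'a"
  assumes ZB: "Z_basis B" and lin: "linear \<Phi>" and inj: "inj \<Phi>" and PL: "\<Phi> ` lattice = lattice"
  shows "Z_basis (\<Phi> ` B)"
proof -
  have fB: "finite B" and BL: "B \<subseteq> lattice"
    and zi: "\<And>c :: real^'a \<Rightarrow> int. (\<Sum>b\<in>B. of_int (c b) *\<^sub>R b) = 0 \<Longrightarrow> (\<forall>b\<in>B. c b = 0)"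
    and zs: "\<And>v. v \<in> lattice \<Longrightarrow> \<exists>c :: real^'a \<Rightarrow> int. v = (\<Sum>b\<in>B. of_int (c b) *\<^sub>R b)"
    using ZB unfolding Z_basis_def by auto
  have ij: "inj_on \<Phi> B" using inj_on_subset[OF inj subset_UNIV] .
  have reidx: "(\<Sum>b'\<in>\<Phi> ` B. g b') = (\<Sum>b\<in>B. g (\<Phi> b))" for g :: "real^'a \<Rightarrow> real^'a"
    using sum.reindex[OF ij] by simp
  have "\<forall>c :: real^'a \<Rightarrow> int. (\<Sum>b\<in>\<Phi> ` B. of_int (c b) *\<^sub>R b) = 0 \<longrightarrow> (\<forall>b\<in>\<Phi> ` B. c b = 0)"
  proof (intro allI impI)
    fix c :: "real^'a \<Rightarrow> int"
    assume "(\<Sum>b\<in>\<Phi> ` B. of_int (c b) *\<^sub>R b) = 0"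
    then have "(\<Sum>b\<in>B. of_int (c (\<Phi> b)) *\<^sub>R \<Phi> b) = 0" using reidx by simp
    then have "\<Phi> (\<Sum>b\<in>B. of_int (c (\<Phi> b)) *\<^sub>R b) = 0"
      by (simp add: linear_sum[OF lin] linear_scale[OF lin])
    then have "(\<Sum>b\<in>B. of_int ((c \<circ> \<Phi>) b) *\<^sub>R b) = 0"
      using linear_injective_0[OF lin] inj by simp
    then have "\<forall>b\<in>B. (c \<circ> \<Phi>) b = 0" by (rule zi)
    then show "\<forall>b\<in>\<Phi> ` B. c b = 0" by simp
  qed
  moreover have "\<forall>v\<in>lattice. \<exists>c :: real^'a \<Rightarrow> int. v = (\<Sum>b\<in>\<Phi> ` B. of_int (c b) *\<^sub>R b)"
  proof
    fix w :: "real^'a" assume "w \<in> lattice"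
    then obtain v where v: "v \<in> lattice" "w = \<Phi> v" using PL by blast
    obtain c :: "real^'a \<Rightarrow> int" where c: "v = (\<Sum>b\<in>B. of_int (c b) *\<^sub>R b)" using zs[OF v(1)] by blast
    have "w = (\<Sum>b\<in>B. of_int (c b) *\<^sub>R \<Phi> b)" unfolding v(2) c
      by (simp add: linear_sum[OF lin] linear_scale[OF lin])
    also have "\<dots> = (\<Sum>b\<in>B. of_int ((c \<circ> inv \<Phi>) (\<Phi> b)) *\<^sub>R \<Phi> b)" using inj by simp
    also have "\<dots> = (\<Sum>b'\<in>\<Phi> ` B. of_int ((c \<circ> inv \<Phi>) b') *\<^sub>R b')" using reidx by simp
    finally show "\<exists>c :: real^'a \<Rightarrow> int. w = (\<Sum>b\<in>\<Phi> ` B. of_int (c b) *\<^sub>R b)" by blast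
  qed
  moreover have "finite (\<Phi> ` B)" "\<Phi> ` B \<subseteq> lattice" using fB BL PL by auto
  ultimately show ?thesis unfolding Z_basis_def by blast
qed

lemma has_maximal: "finite \<Sigma> \<Longrightarrow> \<Sigma> \<noteq> {} \<Longrightarrow> \<exists>\<sigma>. maximal_cone \<Sigma> \<sigma>"
  unfolding maximal_cone_def using finite_has_maximal[of \<Sigma>] by (metis less_le)

theorem corollary5p26:
  fixes \<Sigma>1 \<Sigma>2 :: "(real^'n) set set"
    and \<Psi> :: "(real^'n) set \<Rightarrow> (real^'n) set"
    and \<Phi> :: "real^'n \<Rightarrow> real^'n"
  assumes amp: "amply_equivalent \<Sigma>1 \<Sigma>2 \<Psi>"
    and sm1: "smooth_fan \<Sigma>1"
    and linPhi: "linear \<Phi>" and bijPhi: "bij \<Phi>"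
    and Phi_u: "\<forall>\<rho>\<in>rays \<Sigma>1. \<Phi> (prim_gen \<rho>) = prim_gen (\<Psi> \<rho>)"
  shows "\<Phi> ` lattice \<subseteq> lattice \<and> inj_on \<Phi> lattice
     \<and> simplicial_fan \<Sigma>2
     \<and> ((\<exists>\<sigma>. maximal_cone \<Sigma>2 \<sigma> \<and> smooth_cone \<Sigma>2 \<sigma>) \<longleftrightarrow> \<Phi> ` lattice = lattice)
     \<and> (\<Phi> ` lattice = lattice \<longleftrightarrow> smooth_fan \<Sigma>2)
     \<and> (smooth_fan \<Sigma>2 \<longrightarrow>
          bij_betw \<Phi> lattice lattice \<and> bij_betw (\<lambda>\<sigma>. \<Phi> ` \<sigma>) \<Sigma>1 \<Sigma>2)"
proof -
  have cf1: "complete_fan \<Sigma>1" and cf2: "complete_fan \<Sigma>2"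
    and bijP: "bij_betw \<Psi> (rays \<Sigma>1) (rays \<Sigma>2)"
    using amp unfolding amply_equivalent_def by auto
  have fan1: "fan \<Sigma>1" and fan2: "fan \<Sigma>2" using cf1 cf2 unfolding complete_fan_def by auto
  have ne1: "\<Sigma>1 \<noteq> {}" and ne2: "\<Sigma>2 \<noteq> {}" using cf1 cf2 unfolding complete_fan_def by auto
  have injP: "inj \<Phi>" using bijPhi bij_is_inj by blast
  have surjP: "surj \<Phi>" using bijPhi bij_is_surj by blast
  define \<Phi>' where "\<Phi>' = inv \<Phi>"
  have lin': "linear \<Phi>'" unfolding \<Phi>'_def by (rule eucl.inj_linear_imp_inv_linear[OF linPhi injP])
  have PP': "\<Phi> (\<Phi>' x) = x" for x unfolding \<Phi>'_def using surjP by (simp add: surj_f_inv_f)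
  have P'P: "\<Phi>' (\<Phi> x) = x" for x unfolding \<Phi>'_def using injP by simp
  define \<Psi>' where "\<Psi>' = inv_into (rays \<Sigma>1) \<Psi>"
  have bijP': "bij_betw \<Psi>' (rays \<Sigma>2) (rays \<Sigma>1)" unfolding \<Psi>'_def by (rule bij_betw_inv_into[OF bijP])
  have PsPs': "\<Psi> (\<Psi>' \<rho>) = \<rho>" if "\<rho> \<in> rays \<Sigma>2" for \<rho>
    unfolding \<Psi>'_def using bijP that by (simp add: bij_betw_inv_into_right)
  have Ps'Ps: "\<Psi>' (\<Psi> \<rho>) = \<rho>" if "\<rho> \<in> rays \<Sigma>1" for \<rho>
    unfolding \<Psi>'_def using bijP that by (simp add: bij_betw_inv_into_left)
  have Pmap: "\<forall>\<rho>\<in>rays \<Sigma>1. \<Psi> \<rho> \<in> rays \<Sigma>2" using bijP unfolding bij_betw_def by blast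
  have Pmap': "\<forall>\<rho>\<in>rays \<Sigma>2. \<Psi>' \<rho> \<in> rays \<Sigma>1" using bijP' unfolding bij_betw_def by blast
  have Phi'_u: "\<forall>\<rho>\<in>rays \<Sigma>2. \<Phi>' (prim_gen \<rho>) = prim_gen (\<Psi>' \<rho>)"
  proof
    fix \<rho> assume r: "\<rho> \<in> rays \<Sigma>2"
    have "\<Phi> (prim_gen (\<Psi>' \<rho>)) = prim_gen \<rho>" using Phi_u Pmap' r PsPs' by metis
    then show "\<Phi>' (prim_gen \<rho>) = prim_gen (\<Psi>' \<rho>)" using P'P by metis
  qed
  have G1indep: "\<exists>B. Z_basis B \<and> prim_gen ` cone_rays \<Sigma>1 \<sigma> \<subseteq> B" if "\<sigma> \<in> \<Sigma>1" for \<sigma>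
    using sm1 that unfolding smooth_fan_def smooth_cone_def by blast
  have simp1: "simplicial_fan \<Sigma>1" unfolding simplicial_fan_def
  proof
    fix \<sigma> assume s: "\<sigma> \<in> \<Sigma>1"
    obtain B where B: "Z_basis B" "prim_gen ` cone_rays \<Sigma>1 \<sigma> \<subseteq> B" using G1indep[OF s] by blast
    have "independent (prim_gen ` cone_rays \<Sigma>1 \<sigma>)"
      by (rule real_vector.independent_mono[OF Z_basis_indep[OF B(1)] B(2)])
    moreover have "inj_on prim_gen (cone_rays \<Sigma>1 \<sigma>)"
      using prim_gen_inj[OF fan1] unfolding cone_rays_def by (rule inj_on_subset) blast
    ultimately show "inj_on prim_gen (cone_rays \<Sigma>1 \<sigma>) \<and> independent (prim_gen ` cone_rays \<Sigma>1 \<sigma>)" by blast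
  qed
  have pull: "\<exists>\<sigma>\<in>\<Sigma>1. \<exists>C1. C1 \<subseteq> cone_rays \<Sigma>1 \<sigma> \<and> cone_rays \<Sigma>2 \<tau> = \<Psi> ` C1" if "\<tau> \<in> \<Sigma>2" for \<tau>
  proof -
    define C2 where "C2 = cone_rays \<Sigma>2 \<tau>"
    have C2R: "C2 \<subseteq> rays \<Sigma>2" unfolding C2_def cone_rays_def by blast
    define C1 where "C1 = \<Psi>' ` C2"
    have C1R: "C1 \<subseteq> rays \<Sigma>1" unfolding C1_def using C2R Pmap' by blast
    have e: "\<Psi> ` C1 = C2" unfolding C1_def using C2R PsPs' by (force simp: image_image)
    have "\<Psi> ` C1 \<subseteq> cone_rays \<Sigma>2 \<tau>" using e unfolding C2_def by simp
    then have "\<exists>\<tau>'\<in>\<Sigma>2. \<Psi> ` C1 \<subseteq> cone_rays \<Sigma>2 \<tau>'" using that by blast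
    then obtain \<sigma> where "\<sigma> \<in> \<Sigma>1" "C1 \<subseteq> cone_rays \<Sigma>1 \<sigma>" using K_corr[OF amp C1R] by blast
    moreover have "cone_rays \<Sigma>2 \<tau> = \<Psi> ` C1" using e unfolding C2_def by simp
    ultimately show ?thesis by blast
  qed
  have pg2: "prim_gen ` \<Psi> ` C1 = \<Phi> ` prim_gen ` C1" if "C1 \<subseteq> rays \<Sigma>1" for C1
    using that Phi_u by (force simp: image_image)
  have simp2: "simplicial_fan \<Sigma>2" unfolding simplicial_fan_def
  proof
    fix \<tau> assume t: "\<tau> \<in> \<Sigma>2"
    obtain \<sigma> C1 where sC: "\<sigma> \<in> \<Sigma>1" "C1 \<subseteq> cone_rays \<Sigma>1 \<sigma>" "cone_rays \<Sigma>2 \<tau> = \<Psi> ` C1"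
      using pull[OF t] by blast
    have C1R: "C1 \<subseteq> rays \<Sigma>1" using sC(2) unfolding cone_rays_def by blast
    have "independent (prim_gen ` cone_rays \<Sigma>1 \<sigma>)" using simp1 sC(1) unfolding simplicial_fan_def by blast
    then have "independent (prim_gen ` C1)" by (rule real_vector.independent_mono) (rule image_mono[OF sC(2)])
    then have "independent (\<Phi> ` prim_gen ` C1)"
      by (rule real_vector.linear_independent_injective_image[OF linPhi _ inj_on_subset[OF injP subset_UNIV]])
    then have "independent (prim_gen ` cone_rays \<Sigma>2 \<tau>)" using sC(3) pg2[OF C1R] by simp
    moreover have "inj_on prim_gen (cone_rays \<Sigma>2 \<tau>)"
      using prim_gen_inj[OF fan2] unfolding cone_rays_def by (rule inj_on_subset) blast
    ultimately show "inj_on prim_gen (cone_rays \<Sigma>2 \<tau>) \<and> independent (prim_gen ` cone_rays \<Sigma>2 \<tau>)" by blast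
  qed
  have Kc12: "\<forall>C. C \<subseteq> rays \<Sigma>1 \<longrightarrow> (\<exists>\<sigma>\<in>\<Sigma>1. C \<subseteq> cone_rays \<Sigma>1 \<sigma>) \<longrightarrow> (\<exists>\<tau>\<in>\<Sigma>2. \<Psi> ` C \<subseteq> cone_rays \<Sigma>2 \<tau>)"
  proof (intro allI impI)
    fix C assume CR: "C \<subseteq> rays \<Sigma>1" and k: "\<exists>\<sigma>\<in>\<Sigma>1. C \<subseteq> cone_rays \<Sigma>1 \<sigma>"
    show "\<exists>\<tau>\<in>\<Sigma>2. \<Psi> ` C \<subseteq> cone_rays \<Sigma>2 \<tau>" using K_corr[OF amp CR] k by simp
  qed
  have Kc21: "\<forall>C. C \<subseteq> rays \<Sigma>2 \<longrightarrow> (\<exists>\<sigma>\<in>\<Sigma>2. C \<subseteq> cone_rays \<Sigma>2 \<sigma>) \<longrightarrow> (\<exists>\<tau>\<in>\<Sigma>1. \<Psi>' ` C \<subseteq> cone_rays \<Sigma>1 \<tau>)"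
  proof (intro allI impI)
    fix C assume CR: "C \<subseteq> rays \<Sigma>2" and k: "\<exists>\<sigma>\<in>\<Sigma>2. C \<subseteq> cone_rays \<Sigma>2 \<sigma>"
    have C1R: "\<Psi>' ` C \<subseteq> rays \<Sigma>1" using CR Pmap' by blast
    have "\<Psi> ` \<Psi>' ` C = C" using CR PsPs' by (force simp: image_image)
    then show "\<exists>\<tau>\<in>\<Sigma>1. \<Psi>' ` C \<subseteq> cone_rays \<Sigma>1 \<tau>" using K_corr[OF amp C1R] k by simp
  qed
  have fwd: "\<Phi> ` \<sigma> \<in> \<Sigma>2" if "\<sigma> \<in> \<Sigma>1" for \<sigma>
    by (rule cone_corr[OF fan1 fan2 simp2 Pmap Kc12 linPhi Phi_u that])
  have bwd: "\<Phi>' ` \<tau> \<in> \<Sigma>1" if "\<tau> \<in> \<Sigma>2" for \<tau>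
    by (rule cone_corr[OF fan2 fan1 simp1 Pmap' Kc21 lin' Phi'_u that])
  have bijS: "bij_betw (\<lambda>\<sigma>. \<Phi> ` \<sigma>) \<Sigma>1 \<Sigma>2"
    unfolding bij_betw_def
  proof
    show "inj_on (\<lambda>\<sigma>. \<Phi> ` \<sigma>) \<Sigma>1" using injP by (simp add: inj_on_def inj_image_eq_iff)
    show "(\<lambda>\<sigma>. \<Phi> ` \<sigma>) ` \<Sigma>1 = \<Sigma>2"
    proof
      show "(\<lambda>\<sigma>. \<Phi> ` \<sigma>) ` \<Sigma>1 \<subseteq> \<Sigma>2" using fwd by blast
      show "\<Sigma>2 \<subseteq> (\<lambda>\<sigma>. \<Phi> ` \<sigma>) ` \<Sigma>1"
      proof
        fix \<tau> assume t: "\<tau> \<in> \<Sigma>2"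
        have "\<tau> = \<Phi> ` (\<Phi>' ` \<tau>)" using PP' by (force simp: image_image)
        then show "\<tau> \<in> (\<lambda>\<sigma>. \<Phi> ` \<sigma>) ` \<Sigma>1" using bwd[OF t] by blast
      qed
    qed
  qed
  obtain \<sigma>1 where m1: "maximal_cone \<Sigma>1 \<sigma>1" using has_maximal[OF fan_finite[OF fan1] ne1] by blast
  have s1: "\<sigma>1 \<in> \<Sigma>1" using m1 unfolding maximal_cone_def by blast
  obtain B1 where B1: "Z_basis B1" "prim_gen ` cone_rays \<Sigma>1 \<sigma>1 \<subseteq> B1" using G1indep[OF s1] by blast
  have L1: "\<Phi> ` lattice \<subseteq> lattice"
  proof (rule lat_map[OF cf1 m1 B1 linPhi])
    show "\<forall>\<rho>\<in>cone_rays \<Sigma>1 \<sigma>1. lattice_pt (\<Phi> (prim_gen \<rho>))"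
      using Phi_u Pmap prim_gen_props(2)[OF fan2] unfolding cone_rays_def by simp
  qed
  have P12: "\<Phi> ` lattice = lattice" if h12: "\<exists>\<sigma>. maximal_cone \<Sigma>2 \<sigma> \<and> smooth_cone \<Sigma>2 \<sigma>"
  proof -
    obtain \<tau> B2 where m2: "maximal_cone \<Sigma>2 \<tau>" "Z_basis B2" "prim_gen ` cone_rays \<Sigma>2 \<tau> \<subseteq> B2"
      using h12 unfolding smooth_cone_def by blast
    have L2: "\<Phi>' ` lattice \<subseteq> lattice"
    proof (rule lat_map[OF cf2 m2 lin'])
      show "\<forall>\<rho>\<in>cone_rays \<Sigma>2 \<tau>. lattice_pt (\<Phi>' (prim_gen \<rho>))"
        using Phi'_u Pmap' prim_gen_props(2)[OF fan1] unfolding cone_rays_def by simp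
    qed
    have "lattice \<subseteq> \<Phi> ` lattice"
    proof
      fix w :: "real^'n" assume "w \<in> lattice"
      then have "\<Phi>' w \<in> lattice" using L2 by blast
      then show "w \<in> \<Phi> ` lattice" using PP'[of w] by (metis imageI)
    qed
    then show ?thesis using L1 by blast
  qed
  have P23: "smooth_fan \<Sigma>2" if PL: "\<Phi> ` lattice = lattice"
    unfolding smooth_fan_def smooth_cone_def
  proof
    fix \<tau> assume t: "\<tau> \<in> \<Sigma>2"
    obtain \<sigma> C1 where sC: "\<sigma> \<in> \<Sigma>1" "C1 \<subseteq> cone_rays \<Sigma>1 \<sigma>" "cone_rays \<Sigma>2 \<tau> = \<Psi> ` C1"
      using pull[OF t] by blast
    have C1R: "C1 \<subseteq> rays \<Sigma>1" using sC(2) unfolding cone_rays_def by blast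
    obtain B where B: "Z_basis B" "prim_gen ` cone_rays \<Sigma>1 \<sigma> \<subseteq> B" using G1indep[OF sC(1)] by blast
    have "prim_gen ` cone_rays \<Sigma>2 \<tau> = \<Phi> ` prim_gen ` C1" using sC(3) pg2[OF C1R] by simp
    also have "\<dots> \<subseteq> \<Phi> ` B" using sC(2) B(2) by blast
    finally show "\<exists>B. Z_basis B \<and> prim_gen ` cone_rays \<Sigma>2 \<tau> \<subseteq> B"
      using Z_basis_image[OF B(1) linPhi injP PL] by blast
  qed
  have P31: "\<exists>\<sigma>. maximal_cone \<Sigma>2 \<sigma> \<and> smooth_cone \<Sigma>2 \<sigma>" if h31: "smooth_fan \<Sigma>2"
  proof -
    obtain \<tau> where m2: "maximal_cone \<Sigma>2 \<tau>" using has_maximal[OF fan_finite[OF fan2] ne2] by blast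
    then have "\<tau> \<in> \<Sigma>2" unfolding maximal_cone_def by blast
    then show ?thesis using m2 h31 unfolding smooth_fan_def by blast
  qed
  have injL: "inj_on \<Phi> lattice" using injP inj_on_subset by blast
  show ?thesis
    using L1 injL simp2 P12 P23 P31 bijS unfolding bij_betw_def by blast
qed

end
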